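(* Let $X$ be a Banach space with norm $\|\cdot\|$ and $d\in\mathbb{N}$. For $k\in\mathbb{N}$ let $$F_k=\Big\{x=(x_\alpha)_{\alpha\in\mathbb{N}_0^d}\in X^{\mathbb{N}_0^d}\,:\, \|x\|_k:=\sup_\alpha \|x_\alpha\|\, k^{-|\alpha|}< +\infty\Big\},$$ a Banach space with norm $\|\cdot\|_k$, and let $F=\varinjlim_{k\to+\infty} F_k$ be the inductive limit (locally convex inductive limit topology). For every sequence $\delta=(\delta_n)_{n\in\mathbb{N}}$ of positive real numbers converging to $0$, define on $F$ the norm $$|x|_\delta = \sup_{\alpha\in\mathbb{N}_0^d} \|x_\alpha\|\, \delta_{|\alpha|}^{|\alpha|}.$$ Then the norms $|\cdot|_\delta$, where $\delta$ runs through all positive null-sequences, form a fundamental system of (continuous) seminorms on $F$.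
   Context: For a multi-index $\alpha\in\mathbb{N}_0^d$, $|\alpha|=\alpha_1+\dots+\alpha_d$; the convention $\delta_0^0=1$ is used for $\alpha=0$. *)

theory Defs
  imports "HOL-Analysis.Analysis"
begin

text \<open>Multi-indices in N_0^d are functions 'd => nat for a finite index type 'd
  with CARD('d) = d. Sequences x = (x_alpha) are functions ('d => nat) => 'a.\<close>

definition mlen :: "('d::finite \<Rightarrow> nat) \<Rightarrow> nat" where
  "mlen \<alpha> = (\<Sum>i\<in>UNIV. \<alpha> i)"

definition in_Fk :: "nat \<Rightarrow> (('d::finite \<Rightarrow> nat) \<Rightarrow> 'a::real_normed_vector) \<Rightarrow> bool" where
  "in_Fk k x \<longleftrightarrow> bdd_above (range (\<lambda>\<alpha>. norm (x \<alpha>) / real k ^ mlen \<alpha>))"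

definition normk :: "nat \<Rightarrow> (('d::finite \<Rightarrow> nat) \<Rightarrow> 'a::real_normed_vector) \<Rightarrow> real" where
  "normk k x = (SUP \<alpha>. norm (x \<alpha>) / real k ^ mlen \<alpha>)"

definition Fspace :: "(('d::finite \<Rightarrow> nat) \<Rightarrow> 'a::real_normed_vector) set" where
  "Fspace = {x. \<exists>k\<ge>1. in_Fk k x}"

definition delta_norm :: "(nat \<Rightarrow> real) \<Rightarrow> (('d::finite \<Rightarrow> nat) \<Rightarrow> 'a::real_normed_vector) \<Rightarrow> real" where
  "delta_norm \<delta> x = (SUP \<alpha>. norm (x \<alpha>) * \<delta> (mlen \<alpha>) ^ mlen \<alpha>)"

definition seminorm_on_F :: "((('d::finite \<Rightarrow> nat) \<Rightarrow> 'a::real_normed_vector) \<Rightarrow> real) \<Rightarrow> bool" where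
  "seminorm_on_F p \<longleftrightarrow>
     (\<forall>x\<in>Fspace. 0 \<le> p x) \<and>
     (\<forall>x\<in>Fspace. \<forall>y\<in>Fspace. p (\<lambda>\<alpha>. x \<alpha> + y \<alpha>) \<le> p x + p y) \<and>
     (\<forall>x\<in>Fspace. \<forall>c::real. p (\<lambda>\<alpha>. c *\<^sub>R x \<alpha>) = \<bar>c\<bar> * p x)"

text \<open>A seminorm on the locally convex inductive limit F is continuous iff its restriction
  to each step F_k is continuous for the Banach norm normk k, i.e. bounded by a multiple of it.\<close>
definition continuous_seminorm_on_F :: "((('d::finite \<Rightarrow> nat) \<Rightarrow> 'a::real_normed_vector) \<Rightarrow> real) \<Rightarrow> bool" where
  "continuous_seminorm_on_F p \<longleftrightarrow> seminorm_on_F p \<and>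
     (\<forall>k\<ge>1. \<exists>C. \<forall>x. in_Fk k x \<longrightarrow> p x \<le> C * normk k x)"

end

theory Submission
  imports Defs
begin

lemma normk_upper:
  fixes x :: "('d::finite \<Rightarrow> nat) \<Rightarrow> 'a::real_normed_vector"
  assumes "in_Fk k x"
  shows "norm (x \<alpha>) / real k ^ mlen \<alpha> \<le> normk k x"
  using assms unfolding in_Fk_def normk_def by (intro cSUP_upper) auto

lemma normk_nonneg:
  fixes x :: "('d::finite \<Rightarrow> nat) \<Rightarrow> 'a::real_normed_vector"
  assumes "in_Fk k x"
  shows "0 \<le> normk k x"
  using normk_upper[OF assms, of undefined] by (meson order_trans zero_le_divide_iff norm_ge_zero zero_le_power of_nat_0_le_iff)

lemma normk_least:
  fixes x :: "('d::finite \<Rightarrow> nat) \<Rightarrow> 'a::real_normed_vector"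
  assumes "\<And>\<alpha>. norm (x \<alpha>) / real k ^ mlen \<alpha> \<le> B"
  shows "in_Fk k x" "normk k x \<le> B"
proof -
  show "in_Fk k x" unfolding in_Fk_def bdd_above_def using assms by blast
  show "normk k x \<le> B" unfolding normk_def by (rule cSUP_least) (use assms in auto)
qed

lemma Fk_mono:
  fixes x y :: "('d::finite \<Rightarrow> nat) \<Rightarrow> 'a::real_normed_vector"
  assumes "in_Fk k x" "\<And>\<alpha>. norm (y \<alpha>) \<le> norm (x \<alpha>)"
  shows "in_Fk k y"
proof (rule normk_least(1))
  fix \<alpha>
  have "norm (y \<alpha>) / real k ^ mlen \<alpha> \<le> norm (x \<alpha>) / real k ^ mlen \<alpha>"
    by (rule divide_right_mono) (use assms in auto)
  also have "\<dots> \<le> normk k x" by (rule normk_upper[OF assms(1)])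
  finally show "norm (y \<alpha>) / real k ^ mlen \<alpha> \<le> normk k x" .
qed

lemma bound_k:
  assumes pos: "\<forall>n. \<delta> n > (0::real)" and lim: "\<delta> \<longlonglongrightarrow> 0"
  shows "\<exists>B\<ge>0. \<forall>n. (real k * \<delta> n) ^ n \<le> B"
proof -
  have "(\<lambda>n. real k * \<delta> n) \<longlonglongrightarrow> 0" using tendsto_mult_right_zero[OF lim] by simp
  then have "eventually (\<lambda>n. real k * \<delta> n < 1) sequentially"
    by (rule order_tendstoD) simp
  then obtain N where N: "\<And>n. n \<ge> N \<Longrightarrow> real k * \<delta> n < 1"
    unfolding eventually_sequentially by blast
  define B where "B = 1 + (\<Sum>n<N. (real k * \<delta> n) ^ n)"
  have nn: "\<And>n. 0 \<le> (real k * \<delta> n) ^ n" using pos by (simp add: less_imp_le)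
  have "\<forall>n. (real k * \<delta> n) ^ n \<le> B"
  proof
    fix n
    show "(real k * \<delta> n) ^ n \<le> B"
    proof (cases "n < N")
      case True
      have "(real k * \<delta> n) ^ n \<le> (\<Sum>n<N. (real k * \<delta> n) ^ n)"
        by (rule member_le_sum) (use True nn in auto)
      then show ?thesis unfolding B_def by simp
    next
      case False
      then have "real k * \<delta> n \<le> 1" using N[of n] by simp
      then have "(real k * \<delta> n) ^ n \<le> 1"
        using power_le_one[of "real k * \<delta> n" n] pos by (simp add: less_imp_le)
      moreover have "0 \<le> (\<Sum>n<N. (real k * \<delta> n) ^ n)" by (rule sum_nonneg) (use nn in auto)
      ultimately show ?thesis unfolding B_def by simp
    qed
  qed
  moreover have "B \<ge> 0" unfolding B_def using nn by (simp add: sum_nonneg add_nonneg_nonneg)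
  ultimately show ?thesis by blast
qed

lemma term_bound:
  fixes x :: "('d::finite \<Rightarrow> nat) \<Rightarrow> 'a::real_normed_vector"
  assumes "in_Fk k x" "k \<ge> 1" "\<forall>n. \<delta> n > (0::real)" "\<forall>n. (real k * \<delta> n) ^ n \<le> B"
  shows "norm (x \<alpha>) * \<delta> (mlen \<alpha>) ^ mlen \<alpha> \<le> normk k x * B"
proof -
  define n where "n = mlen \<alpha>"
  have kp: "real k ^ n > 0" using assms(2) by simp
  have "(norm (x \<alpha>) / real k ^ n) * (real k * \<delta> n) ^ n = (norm (x \<alpha>) / real k ^ n) * (real k ^ n * \<delta> n ^ n)"
    by (simp add: power_mult_distrib)
  also have "\<dots> = norm (x \<alpha>) * \<delta> n ^ n" using kp assms(2) by (simp add: field_simps)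
  finally have "norm (x \<alpha>) * \<delta> n ^ n = (norm (x \<alpha>) / real k ^ n) * (real k * \<delta> n) ^ n" by simp
  also have "\<dots> \<le> normk k x * B"
    apply (rule mult_mono)
    using normk_upper[OF assms(1), of \<alpha>] assms(3,4) normk_nonneg[OF assms(1)]
    by (auto simp: n_def less_imp_le)
  finally show ?thesis by (simp add: n_def)
qed

lemma dn_bdd:
  fixes x :: "('d::finite \<Rightarrow> nat) \<Rightarrow> 'a::real_normed_vector"
  assumes "x \<in> Fspace" "\<forall>n. \<delta> n > (0::real)" "\<delta> \<longlonglongrightarrow> 0"
  shows "bdd_above (range (\<lambda>\<alpha>. norm (x \<alpha>) * \<delta> (mlen \<alpha>) ^ mlen \<alpha>))"
proof -
  obtain k where k: "k \<ge> 1" "in_Fk k x" using assms(1) unfolding Fspace_def by blast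
  obtain B where B: "\<forall>n. (real k * \<delta> n) ^ n \<le> B" using bound_k[OF assms(2,3)] by blast
  show ?thesis unfolding bdd_above_def
    using term_bound[OF k(2,1) assms(2) B] by blast
qed

lemma dn_upper:
  fixes x :: "('d::finite \<Rightarrow> nat) \<Rightarrow> 'a::real_normed_vector"
  assumes "x \<in> Fspace" "\<forall>n. \<delta> n > (0::real)" "\<delta> \<longlonglongrightarrow> 0"
  shows "norm (x \<alpha>) * \<delta> (mlen \<alpha>) ^ mlen \<alpha> \<le> delta_norm \<delta> x"
  unfolding delta_norm_def by (rule cSUP_upper) (use dn_bdd[OF assms] in auto)

lemma dn_nonneg:
  fixes x :: "('d::finite \<Rightarrow> nat) \<Rightarrow> 'a::real_normed_vector"
  assumes "x \<in> Fspace" "\<forall>n. \<delta> n > (0::real)" "\<delta> \<longlonglongrightarrow> 0"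
  shows "0 \<le> delta_norm \<delta> x"
  using dn_upper[OF assms, of undefined] assms(2)
  by (meson order_trans mult_nonneg_nonneg norm_ge_zero zero_le_power less_imp_le)

lemma part1_cont:
  fixes \<delta> :: "nat \<Rightarrow> real"
  assumes pos: "\<forall>n. \<delta> n > 0" and lim: "\<delta> \<longlonglongrightarrow> 0" and k: "1 \<le> k"
  shows "\<exists>C. \<forall>x :: ('d::finite \<Rightarrow> nat) \<Rightarrow> 'a::real_normed_vector. in_Fk k x \<longrightarrow> delta_norm \<delta> x \<le> C * normk k x"
proof -
  obtain B where B: "B \<ge> 0" "\<forall>n. (real k * \<delta> n) ^ n \<le> B" using bound_k[OF pos lim] by blast
  have "delta_norm \<delta> x \<le> B * normk k x" if x: "in_Fk k x" for x :: "('d::finite \<Rightarrow> nat) \<Rightarrow> 'a::real_normed_vector"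
    unfolding delta_norm_def
    by (rule cSUP_least) (use term_bound[OF x k pos B(2)] in \<open>auto simp: mult.commute\<close>)
  then show ?thesis by blast
qed

lemma part1:
  fixes \<delta> :: "nat \<Rightarrow> real"
  assumes pos: "\<forall>n. \<delta> n > 0" and lim: "\<delta> \<longlonglongrightarrow> 0"
  shows "continuous_seminorm_on_F (delta_norm \<delta> :: (('d::finite \<Rightarrow> nat) \<Rightarrow> 'a::real_normed_vector) \<Rightarrow> real)"
  unfolding continuous_seminorm_on_F_def seminorm_on_F_def
proof (intro conjI ballI allI impI)
  fix x :: "('d \<Rightarrow> nat) \<Rightarrow> 'a" assume "x \<in> Fspace"
  then show "0 \<le> delta_norm \<delta> x" using dn_nonneg pos lim by blast
next
  fix x y :: "('d \<Rightarrow> nat) \<Rightarrow> 'a" assume x: "x \<in> Fspace" and y: "y \<in> Fspace"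
  show "delta_norm \<delta> (\<lambda>\<alpha>. x \<alpha> + y \<alpha>) \<le> delta_norm \<delta> x + delta_norm \<delta> y"
    unfolding delta_norm_def[of _ "\<lambda>\<alpha>. x \<alpha> + y \<alpha>"]
  proof (rule cSUP_least)
    fix \<alpha>
    have "norm (x \<alpha> + y \<alpha>) * \<delta> (mlen \<alpha>) ^ mlen \<alpha>
        \<le> (norm (x \<alpha>) + norm (y \<alpha>)) * \<delta> (mlen \<alpha>) ^ mlen \<alpha>"
      by (rule mult_right_mono) (use pos norm_triangle_ineq in \<open>auto simp: less_imp_le\<close>)
    also have "\<dots> \<le> delta_norm \<delta> x + delta_norm \<delta> y"
      using dn_upper[OF x pos lim, of \<alpha>] dn_upper[OF y pos lim, of \<alpha>] by (simp add: distrib_right)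
    finally show "norm (x \<alpha> + y \<alpha>) * \<delta> (mlen \<alpha>) ^ mlen \<alpha> \<le> delta_norm \<delta> x + delta_norm \<delta> y" .
  qed auto
next
  fix x :: "('d \<Rightarrow> nat) \<Rightarrow> 'a" and c :: real assume x: "x \<in> Fspace"
  have le: "delta_norm \<delta> (\<lambda>\<alpha>. c *\<^sub>R x \<alpha>) \<le> \<bar>c\<bar> * delta_norm \<delta> x"
    unfolding delta_norm_def[of _ "\<lambda>\<alpha>. c *\<^sub>R x \<alpha>"]
  proof (rule cSUP_least)
    fix \<alpha>
    show "norm (c *\<^sub>R x \<alpha>) * \<delta> (mlen \<alpha>) ^ mlen \<alpha> \<le> \<bar>c\<bar> * delta_norm \<delta> x"
      using mult_left_mono[OF dn_upper[OF x pos lim, of \<alpha>], of "\<bar>c\<bar>"] by (simp add: mult.assoc)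
  qed auto
  show "delta_norm \<delta> (\<lambda>\<alpha>. c *\<^sub>R x \<alpha>) = \<bar>c\<bar> * delta_norm \<delta> x"
  proof (cases "c = 0")
    case True
    then show ?thesis unfolding delta_norm_def by simp
  next
    case False
    have cx: "(\<lambda>\<alpha>. c *\<^sub>R x \<alpha>) \<in> Fspace"
      using x unfolding Fspace_def in_Fk_def bdd_above_def
    proof -
      assume "x \<in> {x. \<exists>k\<ge>1. \<exists>M. \<forall>y\<in>range (\<lambda>\<alpha>. norm (x \<alpha>) / real k ^ mlen \<alpha>). y \<le> M}"
      then obtain k M where k: "k \<ge> 1" "\<forall>\<alpha>. norm (x \<alpha>) / real k ^ mlen \<alpha> \<le> M" by auto
      have "\<forall>\<alpha>. norm (c *\<^sub>R x \<alpha>) / real k ^ mlen \<alpha> \<le> \<bar>c\<bar> * M"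
      proof
        fix \<alpha>
        have "norm (c *\<^sub>R x \<alpha>) / real k ^ mlen \<alpha> = \<bar>c\<bar> * (norm (x \<alpha>) / real k ^ mlen \<alpha>)"
          by simp
        also have "\<dots> \<le> \<bar>c\<bar> * M" by (rule mult_left_mono) (use k(2) in auto)
        finally show "norm (c *\<^sub>R x \<alpha>) / real k ^ mlen \<alpha> \<le> \<bar>c\<bar> * M" .
      qed
      then show "(\<lambda>\<alpha>. c *\<^sub>R x \<alpha>) \<in> {x. \<exists>k\<ge>1. \<exists>M. \<forall>y\<in>range (\<lambda>\<alpha>. norm (x \<alpha>) / real k ^ mlen \<alpha>). y \<le> M}"
        using k(1) by blast
    qed
    have "delta_norm \<delta> x \<le> delta_norm \<delta> (\<lambda>\<alpha>. c *\<^sub>R x \<alpha>) / \<bar>c\<bar>"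
      unfolding delta_norm_def[of _ x]
    proof (rule cSUP_least)
      fix \<alpha>
      have "norm (c *\<^sub>R x \<alpha>) * \<delta> (mlen \<alpha>) ^ mlen \<alpha> \<le> delta_norm \<delta> (\<lambda>\<alpha>. c *\<^sub>R x \<alpha>)"
        using dn_upper[OF cx pos lim, of \<alpha>] by simp
      then show "norm (x \<alpha>) * \<delta> (mlen \<alpha>) ^ mlen \<alpha> \<le> delta_norm \<delta> (\<lambda>\<alpha>. c *\<^sub>R x \<alpha>) / \<bar>c\<bar>"
        using False by (simp add: field_simps)
    qed auto
    then have "\<bar>c\<bar> * delta_norm \<delta> x \<le> delta_norm \<delta> (\<lambda>\<alpha>. c *\<^sub>R x \<alpha>)"
      using False by (simp add: field_simps)
    then show ?thesis using le by linarith
  qed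
next
  fix k :: nat assume k: "1 \<le> k"
  show "\<exists>C. \<forall>x. in_Fk k x \<longrightarrow> delta_norm \<delta> x \<le> C * normk k x"
    using part1_cont[OF pos lim k] by blast
qed

lemma geom_le2: "(\<Sum>n\<le>N. (1/2::real) ^ n) \<le> 2"
proof -
  have "(\<Sum>n\<le>N. (1/2::real) ^ n) = 2 - (1/2) ^ N"
    by (induction N) (auto simp: field_simps)
  then show ?thesis by simp
qed

lemma limit_arg:
  fixes a b c :: real
  assumes "\<forall>N::nat. a \<le> b + c / 2 ^ N"
  shows "a \<le> b"
proof (rule ccontr)
  assume "\<not> a \<le> b"
  then have ab: "a - b > 0" by simp
  show False
  proof (cases "c \<le> 0")
    case True
    then show ?thesis using assms[rule_format, of 0] ab by simp
  next
    case False
    obtain N :: nat where N: "c / (a - b) < 2 ^ N" using real_arch_pow[of 2 "c / (a - b)"] by auto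
    then have "c < (a - b) * 2 ^ N" using ab by (simp add: pos_divide_less_eq mult.commute)
    then have "c / 2 ^ N < a - b" by (simp add: divide_less_eq)
    then show False using assms[rule_format, of N] by simp
  qed
qed

lemma Fspace_I: "in_Fk k x \<Longrightarrow> k \<ge> 1 \<Longrightarrow> x \<in> Fspace"
  unfolding Fspace_def by blast

lemma part2:
  fixes p :: "(('d::finite \<Rightarrow> nat) \<Rightarrow> 'a::real_normed_vector) \<Rightarrow> real"
  assumes cont: "continuous_seminorm_on_F p"
  shows "\<exists>\<delta>::nat \<Rightarrow> real. (\<forall>n. \<delta> n > 0) \<and> \<delta> \<longlonglongrightarrow> 0 \<and>
               (\<exists>C. \<forall>x\<in>Fspace. p x \<le> C * delta_norm \<delta> x)"
proof -
  have sem: "seminorm_on_F p" using cont unfolding continuous_seminorm_on_F_def by blast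
  have tri: "\<And>x y. x \<in> Fspace \<Longrightarrow> y \<in> Fspace \<Longrightarrow> p (\<lambda>\<alpha>. x \<alpha> + y \<alpha>) \<le> p x + p y"
    using sem unfolding seminorm_on_F_def by blast
  have "\<forall>k\<ge>1. \<exists>C. \<forall>x. in_Fk k x \<longrightarrow> p x \<le> C * normk k x"
    using cont unfolding continuous_seminorm_on_F_def by blast
  then obtain Cf where Cf: "\<And>k x. k \<ge> 1 \<Longrightarrow> in_Fk k x \<Longrightarrow> p x \<le> Cf k * normk k x" by metis
  define D where "D k = max 1 (Cf k)" for k
  have D1: "\<And>k. D k \<ge> 1" unfolding D_def by simp
  have Dp: "p x \<le> D k * normk k x" if "k \<ge> 1" "in_Fk k x" for k x
  proof -
    have "p x \<le> Cf k * normk k x" using Cf that by blast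
    also have "\<dots> \<le> D k * normk k x"
      by (rule mult_right_mono) (use normk_nonneg[OF that(2)] in \<open>auto simp: D_def\<close>)
    finally show ?thesis .
  qed
  define G where "G n = {j. 1 \<le> j \<and> j \<le> n \<and> D j \<le> 2 ^ n}" for n :: nat
  define \<delta> where "\<delta> n = (if G n = {} then 2 * D 1 else 4 / real (Max (G n)))" for n
  have finG: "finite (G n)" for n
    by (rule finite_subset[of _ "{..n}"]) (auto simp: G_def)
  have Jin: "Max (G n) \<in> G n" if "G n \<noteq> {}" for n using Max_in[OF finG that] .
  have pos: "\<forall>n. \<delta> n > 0"
  proof
    fix n
    show "\<delta> n > 0"
    proof (cases "G n = {}")
      case True then show ?thesis using D1[of 1] by (simp add: \<delta>_def)
    next
      case False
      have "Max (G n) \<ge> 1" using Jin[OF False] unfolding G_def by blast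
      then show ?thesis using False by (simp add: \<delta>_def)
    qed
  qed
  have E: "\<exists>j\<ge>1. D j / real j ^ n \<le> D 1 * \<delta> n ^ n / 2 ^ n" for n
  proof (cases "G n = {}")
    case True
    have "D 1 * \<delta> n ^ n / 2 ^ n = D 1 * D 1 ^ n"
      using True by (simp add: \<delta>_def power_mult_distrib)
    moreover have "D 1 \<le> D 1 * D 1 ^ n" using D1[of 1] one_le_power[OF D1[of 1], of n]
      by (simp add: mult_le_cancel_left1)
    ultimately show ?thesis by (intro exI[of _ 1]) simp
  next
    case False
    define J where "J = Max (G n)"
    have J: "1 \<le> J" "D J \<le> 2 ^ n" using Jin[OF False] unfolding J_def G_def by auto
    have "D 1 * \<delta> n ^ n / 2 ^ n = D 1 * 2 ^ n / real J ^ n"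
    proof -
      have "\<delta> n ^ n = (2 ^ n * 2 ^ n) / real J ^ n"
        using False by (simp add: \<delta>_def J_def power_divide power_mult_distrib[symmetric])
      then show ?thesis by simp
    qed
    moreover have "D J / real J ^ n \<le> D 1 * 2 ^ n / real J ^ n"
    proof (rule divide_right_mono)
      have "(2::real) ^ n \<le> D 1 * 2 ^ n" using D1[of 1] by simp
      then show "D J \<le> D 1 * 2 ^ n" using J(2) by linarith
    qed simp
    ultimately show ?thesis using J(1) by (intro exI[of _ J]) simp
  qed
  have lim: "\<delta> \<longlonglongrightarrow> 0"
  proof (rule LIMSEQ_I)
    fix r :: real assume r: "0 < r"
    obtain j0 :: nat where j0: "4 / r < real j0" using reals_Archimedean2 by blast
    have "0 < 4 / r" using r by simp
    then have "real j0 > 0" using j0 by linarith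
    then have j0p: "j0 \<ge> 1" by simp
    obtain n0 :: nat where n0: "D j0 < 2 ^ n0" using real_arch_pow[of 2 "D j0"] by auto
    have "\<forall>n\<ge>max j0 n0. norm (\<delta> n - 0) < r"
    proof (intro allI impI)
      fix n assume n: "n \<ge> max j0 n0"
      have "(2::real) ^ n0 \<le> 2 ^ n" by (rule power_increasing) (use n in auto)
      then have "D j0 \<le> 2 ^ n" using n0 by linarith
      then have inG: "j0 \<in> G n" using n j0p unfolding G_def by auto
      then have ne: "G n \<noteq> {}" by blast
      have "j0 \<le> Max (G n)" using Max_ge[OF finG inG] .
      then have "4 / real (Max (G n)) \<le> 4 / real j0"
        using j0p by (intro divide_left_mono) auto
      also have "\<dots> < r" using j0 r j0p by (simp add: divide_less_eq mult.commute pos_divide_less_eq)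
      finally show "norm (\<delta> n - 0) < r" using pos ne by (simp add: \<delta>_def)
    qed
    then show "\<exists>no. \<forall>n\<ge>no. norm (\<delta> n - 0) < r" by blast
  qed
  have main: "p x \<le> (2 * D 1) * delta_norm \<delta> x" if xF: "x \<in> Fspace" for x
  proof -
    obtain k where k: "k \<ge> 1" "in_Fk k x" using xF unfolding Fspace_def by blast
    define M where "M = normk k x"
    have M0: "M \<ge> 0" unfolding M_def by (rule normk_nonneg[OF k(2)])
    have Mup: "norm (x \<alpha>) / real k ^ mlen \<alpha> \<le> M" for \<alpha> unfolding M_def by (rule normk_upper[OF k(2)])
    define dn where "dn = delta_norm \<delta> x"
    have dnx: "norm (x \<alpha>) * \<delta> (mlen \<alpha>) ^ mlen \<alpha> \<le> dn" for \<alpha>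
      unfolding dn_def by (rule dn_upper[OF xF pos lim])
    have dn0: "dn \<ge> 0" unfolding dn_def by (rule dn_nonneg[OF xF pos lim])
    define tr where "tr N = (\<lambda>\<alpha>. if mlen \<alpha> \<le> N then x \<alpha> else 0)" for N
    define sh where "sh n = (\<lambda>\<alpha>. if mlen \<alpha> = n then x \<alpha> else 0)" for n
    define tl where "tl N = (\<lambda>\<alpha>. if mlen \<alpha> \<le> N then 0 else x \<alpha>)" for N
    have trF: "tr N \<in> Fspace" for N
      by (rule Fspace_I[OF Fk_mono[OF k(2)] k(1)]) (simp add: tr_def)
    have shF: "sh n \<in> Fspace" for n
      by (rule Fspace_I[OF Fk_mono[OF k(2)] k(1)]) (simp add: sh_def)
    have shb: "p (sh n) \<le> D 1 / 2 ^ n * dn" for n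
    proof -
      obtain j where j: "j \<ge> 1" "D j / real j ^ n \<le> D 1 * \<delta> n ^ n / 2 ^ n" using E by blast
      have Djp: "D j > 0" using D1[of j] by simp
      have each: "norm (sh n \<alpha>) / real j ^ mlen \<alpha> \<le> D 1 / 2 ^ n * dn / D j" for \<alpha>
      proof (cases "mlen \<alpha> = n")
        case True
        have "D j * (norm (x \<alpha>) / real j ^ n) = (D j / real j ^ n) * norm (x \<alpha>)" by simp
        also have "\<dots> \<le> (D 1 * \<delta> n ^ n / 2 ^ n) * norm (x \<alpha>)"
          by (rule mult_right_mono[OF j(2)]) simp
        also have "\<dots> = D 1 / 2 ^ n * (norm (x \<alpha>) * \<delta> n ^ n)" by simp
        also have "\<dots> \<le> D 1 / 2 ^ n * dn"
          by (rule mult_left_mono) (use dnx[of \<alpha>] True D1[of 1] in auto)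
        finally show ?thesis using True Djp by (simp add: sh_def pos_le_divide_eq mult_ac)
      next
        case False
        then show ?thesis using dn0 Djp D1[of 1] by (simp add: sh_def)
      qed
      have "p (sh n) \<le> D j * normk j (sh n)" by (rule Dp[OF j(1) normk_least(1)[OF each]])
      also have "\<dots> \<le> D j * (D 1 / 2 ^ n * dn / D j)"
        by (rule mult_left_mono[OF normk_least(2)[OF each]]) (use Djp in simp)
      also have "\<dots> = D 1 / 2 ^ n * dn" using Djp by simp
      finally show ?thesis .
    qed
    have trb: "p (tr N) \<le> (\<Sum>n\<le>N. D 1 / 2 ^ n) * dn" for N
    proof (induction N)
      case 0
      have "tr 0 = sh 0" by (auto simp: tr_def sh_def)
      then show ?case using shb[of 0] by simp
    next
      case (Suc N)
      have "tr (Suc N) = (\<lambda>\<alpha>. tr N \<alpha> + sh (Suc N) \<alpha>)"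
        by (auto simp: tr_def sh_def fun_eq_iff le_Suc_eq)
      then have "p (tr (Suc N)) \<le> p (tr N) + p (sh (Suc N))" using tri[OF trF shF] by simp
      also have "\<dots> \<le> (\<Sum>n\<le>N. D 1 / 2 ^ n) * dn + D 1 / 2 ^ Suc N * dn"
        using Suc.IH shb[of "Suc N"] by simp
      finally show ?case by (simp add: distrib_right)
    qed
    have sumb: "(\<Sum>n\<le>N. D 1 / 2 ^ n) \<le> 2 * D 1" for N
    proof -
      have "(\<Sum>n\<le>N. D 1 / 2 ^ n) = D 1 * (\<Sum>n\<le>N. (1/2::real) ^ n)"
        by (simp add: sum_distrib_left power_one_over)
      also have "\<dots> \<le> D 1 * 2" by (rule mult_left_mono[OF geom_le2]) (use D1[of 1] in simp)
      finally show ?thesis by simp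
    qed
    have tlb: "norm (tl N \<alpha>) / real (2 * k) ^ mlen \<alpha> \<le> M / 2 ^ (N + 1)" for N \<alpha>
    proof (cases "mlen \<alpha> \<le> N")
      case True then show ?thesis using M0 by (simp add: tl_def)
    next
      case False
      define m where "m = mlen \<alpha>"
      have "norm (tl N \<alpha>) / real (2 * k) ^ mlen \<alpha> = (norm (x \<alpha>) / real k ^ m) / 2 ^ m"
        using False by (simp add: tl_def m_def power_mult_distrib)
      also have "\<dots> \<le> M / 2 ^ m" by (rule divide_right_mono[OF Mup[of \<alpha>, folded m_def]]) simp
      also have "\<dots> \<le> M / 2 ^ (N + 1)"
      proof (rule divide_left_mono[OF _ M0])
        have "(2::real) ^ (N + 1) \<le> 2 ^ m" by (rule power_increasing) (use False in \<open>auto simp: m_def\<close>)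
        then show "(2::real) ^ (N + 1) \<le> 2 ^ m" .
      qed simp
      finally show ?thesis .
    qed
    have k2: "2 * k \<ge> 1" using k(1) by simp
    have bound: "p x \<le> (2 * D 1) * dn + (D (2 * k) * M / 2) / 2 ^ N" for N
    proof -
      have xs: "x = (\<lambda>\<alpha>. tr N \<alpha> + tl N \<alpha>)" by (auto simp: tr_def tl_def fun_eq_iff)
      have tlF: "tl N \<in> Fspace" by (rule Fspace_I[OF normk_least(1)[OF tlb] k2])
      have "p x \<le> p (tr N) + p (tl N)" using tri[OF trF tlF] xs by metis
      also have "p (tr N) \<le> (2 * D 1) * dn"
        using trb[of N] mult_right_mono[OF sumb[of N] dn0] by linarith
      also have "p (tl N) \<le> D (2 * k) * normk (2 * k) (tl N)" by (rule Dp[OF k2 normk_least(1)[OF tlb]])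
      also have "\<dots> \<le> D (2 * k) * (M / 2 ^ (N + 1))"
        by (rule mult_left_mono[OF normk_least(2)[OF tlb]]) (use D1[of "2*k"] in simp)
      also have "\<dots> = (D (2 * k) * M / 2) / 2 ^ N" by simp
      finally show ?thesis by simp
    qed
    have "p x \<le> (2 * D 1) * dn" by (rule limit_arg) (use bound in blast)
    then show ?thesis by (simp add: dn_def)
  qed
  show ?thesis using pos lim main by blast
qed

theorem lemma1:
  shows "(\<forall>\<delta>::nat \<Rightarrow> real. (\<forall>n. \<delta> n > 0) \<and> \<delta> \<longlonglongrightarrow> 0 \<longrightarrow>
            continuous_seminorm_on_F (delta_norm \<delta> :: (('d::finite \<Rightarrow> nat) \<Rightarrow> 'a::banach) \<Rightarrow> real)) \<and>
         (\<forall>p :: (('d \<Rightarrow> nat) \<Rightarrow> 'a) \<Rightarrow> real. continuous_seminorm_on_F p \<longrightarrow>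
            (\<exists>\<delta>::nat \<Rightarrow> real. (\<forall>n. \<delta> n > 0) \<and> \<delta> \<longlonglongrightarrow> 0 \<and>
               (\<exists>C. \<forall>x\<in>Fspace. p x \<le> C * delta_norm \<delta> x)))"
  using part1 part2 by blast

end
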